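(* Let $X$ be a finite $T_0$-space and $G=\{g_1,\dots,g_m\}$ a finite group with $g_1$ the identity, and suppose $G$ acts freely on $X$ by homeomorphisms. Then (for a suitable labelling of $X$) $X_M$ is a block matrix $(A_{i,j})_{i,j=1,\dots,m}$ with each block $A_{i,j}$ of size $\frac{|X|}{m}\times\frac{|X|}{m}$, such that $A_{i,j}=A_{1,s}$ where $g_s=g_jg_i^{-1}$, for all $i,j=1,\dots,m$.
   Context: A finite $T_0$-space is identified with a finite poset via $x\le y$ iff $U_x\subseteq U_y$, where $U_x$ is the minimal open set containing $x$; homeomorphisms are order automorphisms. For a labelling $X=\{x_1,\dots,x_n\}$, $X_M=(x_{i,j})$ is the $n\times n$ matrix with $x_{i,j}=0$ if $x_i\le x_j$ and $x_{i,j}=1$ otherwise; a different labelling changes $X_M$ to $EX_ME^{-1}$ for a permutation matrix $E$. *)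

theory Defs
  imports "HOL-Algebra.Group_Action"
begin

text \<open>A finite T0-space is identified with a finite poset (X, r), where
  (x,y) in r means U_x is contained in U_y.  Homeomorphisms are order automorphisms.\<close>

definition finite_poset :: "'a set \<Rightarrow> 'a rel \<Rightarrow> bool" where
  "finite_poset X r \<longleftrightarrow> finite X \<and> partial_order_on X r"

definition poset_matrix :: "'a rel \<Rightarrow> (nat \<Rightarrow> 'a) \<Rightarrow> nat \<Rightarrow> nat \<Rightarrow> nat" where
  "poset_matrix r x i j = (if (x i, x j) \<in> r then 0 else 1)"

definition acts_by_homeomorphisms :: "('g, 'm) monoid_scheme \<Rightarrow> 'a set \<Rightarrow> 'a rel \<Rightarrow> ('g \<Rightarrow> 'a \<Rightarrow> 'a) \<Rightarrow> bool" where
  "acts_by_homeomorphisms G X r \<phi> \<longleftrightarrow> group_action G X \<phi> \<and>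
     (\<forall>g \<in> carrier G. \<forall>x \<in> X. \<forall>y \<in> X. (x, y) \<in> r \<longleftrightarrow> (\<phi> g x, \<phi> g y) \<in> r)"

definition acts_freely :: "('g, 'm) monoid_scheme \<Rightarrow> 'a set \<Rightarrow> ('g \<Rightarrow> 'a \<Rightarrow> 'a) \<Rightarrow> bool" where
  "acts_freely G X \<phi> \<longleftrightarrow> (\<forall>g \<in> carrier G. \<forall>x \<in> X. \<phi> g x = x \<longrightarrow> g = \<one>\<^bsub>G\<^esub>)"

end

theory Submission
  imports Defs
begin

lemma orbit_eq_lemma:
  assumes "group_action G X \<phi>" "y \<in> X" "z \<in> orbit G \<phi> y"
  shows "orbit G \<phi> z = orbit G \<phi> y"
proof -
  interpret group_action G X \<phi> by fact
  have zX: "z \<in> X" using assms(3) element_image assms(2) unfolding orbit_def by blast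
  have yz: "y \<in> orbit G \<phi> z" using orbit_sym assms zX by blast
  have oX: "\<And>w. w \<in> X \<Longrightarrow> orbit G \<phi> w \<subseteq> X" unfolding orbit_def using element_image by blast
  show ?thesis
  proof
    show "orbit G \<phi> z \<subseteq> orbit G \<phi> y"
      using orbit_trans[OF assms(2) zX] assms(3) oX[OF zX] by blast
    show "orbit G \<phi> y \<subseteq> orbit G \<phi> z"
      using orbit_trans[OF zX assms(2)] yz oX[OF assms(2)] by blast
  qed
qed

lemma free_decomp:
  fixes X :: "'a set"
  assumes ga: "group_action G X \<phi>"
    and fr: "\<forall>g\<in>carrier G. \<forall>x\<in>X. \<phi> g x = x \<longrightarrow> g = \<one>\<^bsub>G\<^esub>"
  shows "\<exists>R \<subseteq> X. bij_betw (\<lambda>(h,y). \<phi> h y) (carrier G \<times> R) X"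
proof -
  interpret group_action G X \<phi> by fact
  interpret group G using group_hom group_hom.axioms(1) by auto
  define rep where "rep = (\<lambda>Ob. SOME y. y \<in> (Ob::'a set))"
  define R where "R = rep ` orbits G X \<phi>"
  have oX: "\<And>w. w \<in> X \<Longrightarrow> orbit G \<phi> w \<subseteq> X" unfolding orbit_def using element_image by blast
  have repin: "\<And>w. w \<in> X \<Longrightarrow> rep (orbit G \<phi> w) \<in> orbit G \<phi> w"
    unfolding rep_def using orbit_refl by (meson someI)
  have RX: "R \<subseteq> X" unfolding R_def orbits_def using repin oX by blast
  have Rrep: "\<And>y. y \<in> R \<Longrightarrow> rep (orbit G \<phi> y) = y"
  proof -
    fix y assume "y \<in> R"
    then obtain w where w: "w \<in> X" "y = rep (orbit G \<phi> w)" unfolding R_def orbits_def by blast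
    then have "orbit G \<phi> y = orbit G \<phi> w" using orbit_eq_lemma[OF ga w(1)] repin by blast
    thus "rep (orbit G \<phi> y) = y" using w by simp
  qed
  have "bij_betw (\<lambda>(h,y). \<phi> h y) (carrier G \<times> R) X"
    unfolding bij_betw_def
  proof (intro conjI)
    show "inj_on (\<lambda>(h,y). \<phi> h y) (carrier G \<times> R)"
    proof (rule inj_onI, clarify)
      fix h y h' y' assume h: "h \<in> carrier G" "y \<in> R" "h' \<in> carrier G" "y' \<in> R"
        and eq: "\<phi> h y = \<phi> h' y'"
      have yX: "y \<in> X" "y' \<in> X" using h RX by auto
      have "\<phi> (inv\<^bsub>G\<^esub> h') (\<phi> h y) = y'" using orbit_sym_aux[OF h(3) yX(2)] eq by simp
      hence e2: "\<phi> (inv\<^bsub>G\<^esub> h' \<otimes>\<^bsub>G\<^esub> h) y = y'" using composition_rule[OF yX(1)] h by simp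
      hence "y' \<in> orbit G \<phi> y" unfolding orbit_def using h by blast
      hence "orbit G \<phi> y' = orbit G \<phi> y" using orbit_eq_lemma[OF ga yX(1)] by blast
      hence yy: "y' = y"
      proof -
        assume oe: "orbit G \<phi> y' = orbit G \<phi> y"
        have "y' = rep (orbit G \<phi> y')" using Rrep[OF h(4)] by (rule sym)
        also have "\<dots> = rep (orbit G \<phi> y)" by (simp only: oe)
        also have "\<dots> = y" by (rule Rrep[OF h(2)])
        finally show "y' = y" .
      qed
      hence "inv\<^bsub>G\<^esub> h' \<otimes>\<^bsub>G\<^esub> h = \<one>\<^bsub>G\<^esub>" proof -
        have c: "inv\<^bsub>G\<^esub> h' \<otimes>\<^bsub>G\<^esub> h \<in> carrier G" using h by simp
        have "\<phi> (inv\<^bsub>G\<^esub> h' \<otimes>\<^bsub>G\<^esub> h) y = y" using e2 yy by simp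
        thus ?thesis using fr c yX(1) by blast
      qed
      hence "h' \<otimes>\<^bsub>G\<^esub> (inv\<^bsub>G\<^esub> h' \<otimes>\<^bsub>G\<^esub> h) = h'" using h by simp
      hence "h' = h" using h by (simp add: m_assoc[symmetric])
      thus "h = h' \<and> y = y'" using yy by simp
    qed
    show "(\<lambda>(h,y). \<phi> h y) ` (carrier G \<times> R) = X"
    proof
      show "(\<lambda>(h,y). \<phi> h y) ` (carrier G \<times> R) \<subseteq> X"
      proof clarify
        fix h y assume "h \<in> carrier G" "y \<in> R"
        thus "\<phi> h y \<in> X" using RX surj_prop by blast
      qed
      show "X \<subseteq> (\<lambda>(h,y). \<phi> h y) ` (carrier G \<times> R)"
      proof
        fix x assume x: "x \<in> X"
        define ry where "ry = rep (orbit G \<phi> x)"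
        have "orbit G \<phi> x \<in> orbits G X \<phi>" unfolding orbits_def using x by blast
        hence ryR: "ry \<in> R" unfolding R_def ry_def by (rule imageI)
        have "ry \<in> orbit G \<phi> x" unfolding ry_def by (rule repin[OF x])
        then obtain h where h: "h \<in> carrier G" "\<phi> h x = ry"
          unfolding orbit_def by blast
        have hx: "\<phi> (inv\<^bsub>G\<^esub> h) ry = x" by (rule orbit_sym_aux[OF h(1) x h(2)])
        have "(inv\<^bsub>G\<^esub> h, ry) \<in> carrier G \<times> R" using h(1) ryR by simp
        moreover have "x = (\<lambda>(h,y). \<phi> h y) (inv\<^bsub>G\<^esub> h, ry)" using hx by simp
        ultimately show "x \<in> (\<lambda>(h,y). \<phi> h y) ` (carrier G \<times> R)"
          by (rule rev_image_eqI)
      qed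
    qed
  qed
  thus ?thesis using RX by blast
qed

lemma idx_div:
  assumes "1 \<le> a" "a \<le> (k::nat)"
  shows "((i - 1) * k + a - 1) div k = i - 1" "((i - 1) * k + a - 1) mod k = a - 1"
proof -
  have e: "(i - 1) * k + a - 1 = (a - 1) + k * (i - 1)" using assms by (simp add: mult.commute)
  have "a - 1 < k" using assms by simp
  thus "((i - 1) * k + a - 1) div k = i - 1" "((i - 1) * k + a - 1) mod k = a - 1"
    unfolding e by simp_all
qed

theorem mainTheorem17:
  fixes X :: "'a set" and r :: "'a rel"
    and G :: "('g, 'm) monoid_scheme" and \<phi> :: "'g \<Rightarrow> 'a \<Rightarrow> 'a"
    and g :: "nat \<Rightarrow> 'g" and m :: nat
  assumes "finite_poset X r"
    and "group G" and "finite (carrier G)"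
    and "m = card (carrier G)"
    and "bij_betw g {1..m} (carrier G)" and "g 1 = \<one>\<^bsub>G\<^esub>"
    and "acts_by_homeomorphisms G X r \<phi>"
    and "acts_freely G X \<phi>"
  shows "\<exists>x :: nat \<Rightarrow> 'a. bij_betw x {1..card X} X \<and>
           card X = m * (card X div m) \<and>
           (let k = card X div m in
            \<forall>i \<in> {1..m}. \<forall>j \<in> {1..m}. \<forall>s \<in> {1..m}.
              g s = g j \<otimes>\<^bsub>G\<^esub> inv\<^bsub>G\<^esub> (g i) \<longrightarrow>
              (\<forall>a \<in> {1..k}. \<forall>b \<in> {1..k}.
                 poset_matrix r x ((i - 1) * k + a) ((j - 1) * k + b)
                 = poset_matrix r x a ((s - 1) * k + b)))"
proof -
  have ga: "group_action G X \<phi>" and hom: "\<forall>g \<in> carrier G. \<forall>x \<in> X. \<forall>y \<in> X. (x, y) \<in> r \<longleftrightarrow> (\<phi> g x, \<phi> g y) \<in> r"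
    using assms(7) unfolding acts_by_homeomorphisms_def by auto
  interpret group_action G X \<phi> by fact
  interpret group G by fact
  have finX: "finite X" using assms(1) unfolding finite_poset_def by simp
  obtain R where RX: "R \<subseteq> X" and bF: "bij_betw (\<lambda>(h,y). \<phi> h y) (carrier G \<times> R) X"
    using free_decomp[OF ga] assms(8) unfolding acts_freely_def by blast
  have finR: "finite R" using RX finX finite_subset by blast
  define k where "k = card R"
  have "carrier G \<noteq> {}" using one_closed by blast
  hence mpos: "m > 0" using assms(3,4) by (simp add: card_gt_0_iff)
  have "card (carrier G \<times> R) = card X" using bij_betw_same_card[OF bF] .
  hence cX: "card X = m * k" using assms(4) k_def by (simp add: card_cartesian_product)
  have kdef: "card X div m = k" using cX mpos by simp
  obtain y where ybij: "bij_betw y {1..k} R" using ex_bij_betw_nat_finite_1[OF finR] k_def by blast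
  define x where "x = (\<lambda>n. \<phi> (inv\<^bsub>G\<^esub> (g ((n - 1) div k + 1))) (y ((n - 1) mod k + 1)))"
  have gin: "\<And>i. i \<in> {1..m} \<Longrightarrow> g i \<in> carrier G" using assms(5) bij_betwE by blast
  have yin: "\<And>a. a \<in> {1..k} \<Longrightarrow> y a \<in> R" using ybij bij_betwE by blast
  have xform: "\<And>i a. i \<in> {1..m} \<Longrightarrow> a \<in> {1..k} \<Longrightarrow> x ((i - 1) * k + a) = \<phi> (inv\<^bsub>G\<^esub> (g i)) (y a)"
  proof -
    fix i a assume i: "i \<in> {1..m}" and a: "a \<in> {1..k}"
    show "x ((i - 1) * k + a) = \<phi> (inv\<^bsub>G\<^esub> (g i)) (y a)"
      unfolding x_def using idx_div[of a k i] i a by simp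
  qed
  have decomp: "\<And>n. n \<in> {1..m*k} \<Longrightarrow> \<exists>i\<in>{1..m}. \<exists>a\<in>{1..k}. n = (i - 1) * k + a"
  proof -
    fix n assume n: "n \<in> {1..m*k}"
    hence kp: "k > 0" by (cases k) auto
    have "n - 1 < m * k" using n by auto
    hence "(n - 1) div k < m" using n kp by (simp add: less_mult_imp_div_less)
    moreover have "(n - 1) mod k < k" using kp by simp
    moreover have "n = ((n - 1) div k + 1 - 1) * k + ((n - 1) mod k + 1)"
      using n by (simp add: add.commute)
    ultimately have "(n - 1) div k + 1 \<in> {1..m}" "(n - 1) mod k + 1 \<in> {1..k}"
      "n = ((n - 1) div k + 1 - 1) * k + ((n - 1) mod k + 1)" by auto
    thus "\<exists>i\<in>{1..m}. \<exists>a\<in>{1..k}. n = (i - 1) * k + a" by blast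
  qed
  have xbij: "bij_betw x {1..card X} X"
  proof -
    have img: "x ` {1..m*k} \<subseteq> X"
    proof
      fix z assume "z \<in> x ` {1..m*k}"
      then obtain i a where ia: "i \<in> {1..m}" "a \<in> {1..k}" "z = x ((i - 1) * k + a)" using decomp by blast
      have c: "inv\<^bsub>G\<^esub> (g i) \<in> carrier G" using gin ia(1) by simp
      have "y a \<in> X" using yin ia(2) RX by blast
      hence "\<phi> (inv\<^bsub>G\<^esub> (g i)) (y a) \<in> X" using surj_prop[OF c] by blast
      then show "z \<in> X" using xform ia by simp
    qed
    have inj: "inj_on x {1..m*k}"
    proof (rule inj_onI)
      fix n n' assume n: "n \<in> {1..m*k}" and n': "n' \<in> {1..m*k}" and e: "x n = x n'"
      obtain i a where ia: "i \<in> {1..m}" "a \<in> {1..k}" "n = (i - 1) * k + a" using decomp n by blast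
      obtain i' a' where ia': "i' \<in> {1..m}" "a' \<in> {1..k}" "n' = (i' - 1) * k + a'" using decomp n' by blast
      have "(\<lambda>(h,y). \<phi> h y) (inv\<^bsub>G\<^esub> (g i), y a) = (\<lambda>(h,y). \<phi> h y) (inv\<^bsub>G\<^esub> (g i'), y a')"
        using e ia ia' xform by simp
      moreover have "(inv\<^bsub>G\<^esub> (g i), y a) \<in> carrier G \<times> R" "(inv\<^bsub>G\<^esub> (g i'), y a') \<in> carrier G \<times> R"
        using gin yin ia ia' by auto
      ultimately have "(inv\<^bsub>G\<^esub> (g i), y a) = (inv\<^bsub>G\<^esub> (g i'), y a')"
        using inj_onD[OF bij_betw_imp_inj_on[OF bF]] by blast
      hence "inv\<^bsub>G\<^esub> (g i) = inv\<^bsub>G\<^esub> (g i')" "y a = y a'" by simp_all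
      hence "g i = g i'" "a = a'"
      proof -
        have "g i = inv\<^bsub>G\<^esub> (inv\<^bsub>G\<^esub> (g i))" using gin ia(1) by simp
        also have "\<dots> = inv\<^bsub>G\<^esub> (inv\<^bsub>G\<^esub> (g i'))" using \<open>inv\<^bsub>G\<^esub> (g i) = inv\<^bsub>G\<^esub> (g i')\<close> by simp
        also have "\<dots> = g i'" using gin ia'(1) by simp
        finally show "g i = g i'" .
        show "a = a'" using inj_onD[OF bij_betw_imp_inj_on[OF ybij] \<open>y a = y a'\<close> ia(2) ia'(2)] .
      qed
      hence "i = i'" using inj_onD[OF bij_betw_imp_inj_on[OF assms(5)]] ia(1) ia'(1) by blast
      thus "n = n'" using ia ia' \<open>a = a'\<close> by simp
    qed
    have "card (x ` {1..m*k}) = card X" using card_image[OF inj] cX by simp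
    hence "x ` {1..m*k} = X" using card_subset_eq[OF finX img] by simp
    thus ?thesis using inj cX unfolding bij_betw_def by simp
  qed
  have mat: "\<forall>i \<in> {1..m}. \<forall>j \<in> {1..m}. \<forall>s \<in> {1..m}.
              g s = g j \<otimes>\<^bsub>G\<^esub> inv\<^bsub>G\<^esub> (g i) \<longrightarrow>
              (\<forall>a \<in> {1..k}. \<forall>b \<in> {1..k}.
                 poset_matrix r x ((i - 1) * k + a) ((j - 1) * k + b)
                 = poset_matrix r x a ((s - 1) * k + b))"
  proof (intro ballI impI)
    fix i j s a b assume i: "i \<in> {1..m}" and j: "j \<in> {1..m}" and s: "s \<in> {1..m}"
      and gs: "g s = g j \<otimes>\<^bsub>G\<^esub> inv\<^bsub>G\<^esub> (g i)" and a: "a \<in> {1..k}" and b: "b \<in> {1..k}"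
    have gi: "g i \<in> carrier G" and gj: "g j \<in> carrier G" using gin i j by auto
    have ya: "y a \<in> X" and yb: "y b \<in> X" using yin a b RX by auto
    have one: "1 \<in> {1..m}" using mpos by simp
    have xa0: "x a = \<phi> (inv\<^bsub>G\<^esub> (g 1)) (y a)" using xform[OF one a] by simp
    have "\<phi> \<one>\<^bsub>G\<^esub> (y a) = y a" by (simp add: id_eq_one[symmetric] ya)
    hence xa: "x a = y a" using xa0 assms(6) by simp
    have invs: "inv\<^bsub>G\<^esub> (g s) = g i \<otimes>\<^bsub>G\<^esub> inv\<^bsub>G\<^esub> (g j)" using gs gi gj by (simp add: inv_mult_group)
    have e1: "\<phi> (g i) (\<phi> (inv\<^bsub>G\<^esub> (g i)) (y a)) = y a"
    proof -
      have "\<phi> (g i \<otimes>\<^bsub>G\<^esub> inv\<^bsub>G\<^esub> (g i)) (y a) = \<phi> (g i) (\<phi> (inv\<^bsub>G\<^esub> (g i)) (y a))"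
        using composition_rule[OF ya, of "g i" "inv\<^bsub>G\<^esub> (g i)"] gi by simp
      moreover have "\<phi> \<one>\<^bsub>G\<^esub> (y a) = y a" by (simp add: id_eq_one[symmetric] ya)
      ultimately show ?thesis using gi by simp
    qed
    have e2: "\<phi> (g i) (\<phi> (inv\<^bsub>G\<^esub> (g j)) (y b)) = \<phi> (inv\<^bsub>G\<^esub> (g s)) (y b)"
      using composition_rule[OF yb] gi gj invs by simp
    have m1: "\<phi> (inv\<^bsub>G\<^esub> (g i)) (y a) \<in> X" "\<phi> (inv\<^bsub>G\<^esub> (g j)) (y b) \<in> X"
      using element_image gi gj ya yb by (meson inv_closed)+
    have "((\<phi> (inv\<^bsub>G\<^esub> (g i)) (y a)), (\<phi> (inv\<^bsub>G\<^esub> (g j)) (y b))) \<in> r \<longleftrightarrow> (y a, \<phi> (inv\<^bsub>G\<^esub> (g s)) (y b)) \<in> r"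
      using hom[rule_format, OF gi m1] e1 e2 by simp
    thus "poset_matrix r x ((i - 1) * k + a) ((j - 1) * k + b) = poset_matrix r x a ((s - 1) * k + b)"
      unfolding poset_matrix_def using xform i j s a b xa by simp
  qed
  show ?thesis
    unfolding Let_def kdef
    apply (rule exI[of _ x])
    apply (intro conjI)
      apply (rule xbij)
     apply (rule cX)
    apply (rule mat)
    done
qed

end
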